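(* Let $t\geq 1$ and let $C=\{a_1,\ldots,a_m\}$ be a fan grounded by a curve $\gamma=\gamma_1\cup\cdots\cup\gamma_m$. If each $a_i$ intersects $\gamma$ in at most $t$ points, then there is a subfan $C'=\{a_{i_1},\ldots,a_{i_r}\}\subseteq C$ with $i_1<\cdots<i_r$ and $r=\lfloor\log_{t+1}\log_{t+1}m\rfloor$ that is well-grounded by a subcurve $\gamma'=\gamma'_1\cup\cdots\cup\gamma'_r\subseteq\gamma$, with $\gamma'_j\supseteq\gamma_{i_j}$ for $1\leq j\leq r$.
   Context: All curves are simple; no two curves are tangent (a shared interior point is a proper crossing). A fan with apex $v$ is a collection of curves with common endpoint $v$. Let $\gamma$ be a curve with endpoints $p,q$, partitioned into subcurves $\gamma_1,\ldots,\gamma_m$ appearing in this order along $\gamma$ from $p$ to $q$ (consecutive pieces sharing an endpoint). A fan $C=\{a_1,\ldots,a_m\}$ with apex $v$ is grounded by $\gamma_1\cup\cdots\cup\gamma_m$ if $v\notin\gamma$ and each $a_i$ has its other endpoint on $\gamma_i$. It is well-grounded by $\gamma_1\cup\cdots\cup\gamma_m$ if in addition each $a_i$ intersects $\gamma$ only within $\gamma_i$. *)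

theory Defs
  imports "HOL-Analysis.Analysis"
begin

text \<open>A curve partitioned into consecutive pieces is represented by an arc g together with
breakpoints s 0 < s 1 < ... < s m in [0,1]; the whole curve is g ` {s 0..s m} and
the i-th piece (1 <= i <= m) is g ` {s (i-1)..s i}.\<close>

definition piece :: "(real \<Rightarrow> 'a) \<Rightarrow> (nat \<Rightarrow> real) \<Rightarrow> nat \<Rightarrow> 'a set" where
  "piece g s i = g ` {s (i - 1)..s i}"

definition whole :: "(real \<Rightarrow> 'a) \<Rightarrow> (nat \<Rightarrow> real) \<Rightarrow> nat \<Rightarrow> 'a set" where
  "whole g s m = g ` {s 0..s m}"

definition subdivided_curve :: "(real \<Rightarrow> real^2) \<Rightarrow> (nat \<Rightarrow> real) \<Rightarrow> nat \<Rightarrow> bool" where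
  "subdivided_curve g s m \<longleftrightarrow> arc g \<and> 0 \<le> s 0 \<and> s m \<le> 1 \<and> (\<forall>i<m. s i < s (Suc i))"

definition grounded ::
  "(nat \<Rightarrow> real \<Rightarrow> real^2) \<Rightarrow> real^2 \<Rightarrow> (real \<Rightarrow> real^2) \<Rightarrow> (nat \<Rightarrow> real) \<Rightarrow> nat \<Rightarrow> bool" where
  "grounded a v g s m \<longleftrightarrow> subdivided_curve g s m \<and> v \<notin> whole g s m \<and>
     (\<forall>i\<in>{1..m}. arc (a i) \<and> pathstart (a i) = v \<and> pathfinish (a i) \<in> piece g s i)"

definition well_grounded ::
  "(nat \<Rightarrow> real \<Rightarrow> real^2) \<Rightarrow> real^2 \<Rightarrow> (real \<Rightarrow> real^2) \<Rightarrow> (nat \<Rightarrow> real) \<Rightarrow> nat \<Rightarrow> bool" where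
  "well_grounded a v g s m \<longleftrightarrow> grounded a v g s m \<and>
     (\<forall>i\<in>{1..m}. path_image (a i) \<inter> whole g s m \<subseteq> piece g s i)"

end

theory Submission imports Defs begin

lemma bern: "1 + R * t \<le> (t+1::nat)^R"
proof (induction R)
  case 0 then show ?case by simp
next
  case (Suc R)
  have "1 + Suc R * t \<le> (t+1) * (1 + R*t)" by (simp add: algebra_simps)
  also have "\<dots> \<le> (t+1) * (t+1)^R" by (rule mult_le_mono2[OF Suc.IH])
  finally show ?case by simp
qed

lemma natbound: assumes "t \<ge> 1" shows "R^t \<le> (t+1::nat)^((t+1)^R)"
proof -
  have "R < 2^R" by (rule less_exp)
  also have "(2::nat)^R \<le> (t+1)^R" using assms by (intro power_mono) auto
  finally have "R \<le> (t+1)^R" by simp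
  hence "R^t \<le> ((t+1)^R)^t" by (rule power_mono) simp
  also have "\<dots> = (t+1)^(R*t)" by (simp add: power_mult)
  also have "\<dots> \<le> (t+1)^((t+1)^R)" using bern[of R t] by (intro power_increasing) auto
  finally show ?thesis .
qed

lemma numbound:
  fixes t m :: nat
  assumes "t \<ge> 1" "R = nat \<lfloor>log (t + 1) (log (t + 1) m)\<rfloor>" "R \<ge> 1"
  shows "R^t \<le> m"
proof -
  define b :: real where "b = t + 1"
  have b1: "1 < b" using assms(1) by (simp add: b_def)
  have "real R \<le> log b (log b m)" using assms(2,3) unfolding b_def by linarith
  hence L1: "1 \<le> log b (log b m)" using assms(3) by linarith
  have Lnn: "log b m \<ge> 0"
  proof (cases "m = 0")
    case True then show ?thesis by (simp add: log_def)
  next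
    case False then show ?thesis using b1 by simp
  qed
  have Lpos: "log b m > 0"
  proof (rule ccontr)
    assume "\<not> ?thesis" hence "log b m = 0" using Lnn by linarith
    hence "log b (log b m) = 0" by (simp only:) (simp add: log_def)
    thus False using L1 by linarith
  qed
  have mpos: "m > 0" using Lpos by (cases "m = 0") (auto simp: log_def)
  have "b powr real R \<le> log b m" using \<open>real R \<le> log b (log b m)\<close> le_log_iff[OF b1 Lpos] by blast
  hence "b ^ R \<le> log b m" using b1 by (simp add: powr_realpow)
  hence "b powr (b ^ R) \<le> m" using le_log_iff[OF b1] mpos by simp
  moreover have "b powr (b^R) = b ^ ((t+1)^R)"
    using b1 powr_realpow[of b "(t+1)^R"] by (simp add: b_def)
  ultimately have "real ((t+1)^((t+1)^R)) \<le> real m" by (simp add: b_def)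
  hence "(t+1)^((t+1)^R) \<le> m" by linarith
  thus ?thesis using natbound[OF assms(1), of R] by linarith
qed

definition good :: "(nat \<Rightarrow> real) \<Rightarrow> (nat \<Rightarrow> real set) \<Rightarrow> nat \<Rightarrow> nat \<Rightarrow> nat \<Rightarrow> (nat \<Rightarrow> nat) \<Rightarrow> (nat \<Rightarrow> real) \<Rightarrow> bool" where
  "good s Q r lo hi idx u \<longleftrightarrow> strict_mono_on {1..r} idx \<and> idx ` {1..r} \<subseteq> {lo<..hi}
    \<and> (\<forall>j\<in>{1..r}. u (j-1) < u j) \<and> s lo \<le> u 0 \<and> u r \<le> s hi
    \<and> (\<forall>j\<in>{1..r}. {s(idx j - 1)..s(idx j)} \<subseteq> {u(j-1)..u j} \<and> Q (idx j) \<inter> {u 0..u r} \<subseteq> {u(j-1)..u j})"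

lemma smono_le:
  fixes s :: "nat \<Rightarrow> real"
  assumes "\<forall>i j. i < j \<longrightarrow> j \<le> m \<longrightarrow> s i < s j" "i \<le> j" "j \<le> m"
  shows "s i \<le> s j"
  using assms by (cases "i = j") (auto intro: less_imp_le)

lemma good_weaken:
  fixes s :: "nat \<Rightarrow> real"
  assumes "good s Q r lo hi idx u" "lo' \<le> lo" "hi \<le> hi'" "s lo' \<le> s lo" "s hi \<le> s hi'"
  shows "good s Q r lo' hi' idx u"
  using assms unfolding good_def by (auto 4 3)

lemma comb:
  fixes s :: "nat \<Rightarrow> real" and Q :: "nat \<Rightarrow> real set" and r m :: nat
  assumes r1: "r \<ge> 1" and mono: "\<forall>i j. i < j \<longrightarrow> j \<le> m \<longrightarrow> s i < s j"
  shows "b0 + n \<le> m \<Longrightarrow> r^k \<le> n \<Longrightarrow>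
    (\<forall>i\<in>{b0<..b0+n}. finite (Q i) \<and> card (Q i \<inter> {s b0..s(b0+n)}) \<le> k \<and> Q i \<inter> {s(i-1)..s i} \<noteq> {})
    \<Longrightarrow> \<exists>idx u. good s Q r b0 (b0+n) idx u"
proof (induction k arbitrary: b0 n)
  case 0
  define i where "i = Suc b0"
  have iin: "i \<in> {b0<..b0+n}" using 0 by (simp add: i_def)
  have "s i \<le> s (b0+n)" using smono_le[OF mono, of i "b0+n"] 0 iin by auto
  hence sub: "Q i \<inter> {s(i-1)..s i} \<subseteq> Q i \<inter> {s b0..s(b0+n)}" by (auto simp: i_def)
  have "Q i \<inter> {s b0..s(b0+n)} = {}" using 0(3) iin by (metis card_0_eq finite_Int le_zero_eq)
  thus ?case using sub 0(3) iin by blast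
next
  case (Suc k)
  define M where "M = r^k"
  have M1: "M \<ge> 1" using r1 by (simp add: M_def)
  have rM: "r * M \<le> n" using Suc.prems(2) by (simp add: M_def)
  define W where "W = {s b0..s(b0 + r*M)}"
  define cell where "cell j = {s(b0+(j-1)*M)..s(b0+j*M)}" for j
  have smle: "\<And>i j. i \<le> j \<Longrightarrow> j \<le> m \<Longrightarrow> s i \<le> s j" using smono_le[OF mono] by blast
  have smlt: "\<And>i j. i < j \<Longrightarrow> j \<le> m \<Longrightarrow> s i < s j" using mono by blast
  show ?case
  proof (cases "\<exists>j\<in>{1..r}. \<forall>c\<in>{b0+(j-1)*M<..b0+j*M}. \<not> (Q c \<inter> W \<subseteq> cell j)")
    case True
    then obtain j where j: "j \<in> {1..r}" and bad: "\<forall>c\<in>{b0+(j-1)*M<..b0+j*M}. \<not> (Q c \<inter> W \<subseteq> cell j)" by blast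
    define b1 where "b1 = b0 + (j-1)*M"
    have jM: "(j-1)*M + M = j*M" using j by (cases j) auto
    have b1M: "b1 + M = b0 + j*M" using jM by (simp add: b1_def)
    have jMle: "j*M \<le> r*M" using j by simp
    have cellj: "cell j = {s b1..s(b1+M)}" unfolding cell_def b1M by (simp add: b1_def)
    have hi: "b1 + M \<le> b0 + n" using b1M jMle rM by linarith
    have IH: "\<exists>idx u. good s Q r b1 (b1+M) idx u"
    proof (rule Suc.IH)
      show "b1 + M \<le> m" using hi Suc.prems(1) by linarith
      show "r^k \<le> M" by (simp add: M_def)
      show "\<forall>i\<in>{b1<..b1+M}. finite (Q i) \<and> card (Q i \<inter> {s b1..s(b1+M)}) \<le> k \<and> Q i \<inter> {s(i-1)..s i} \<noteq> {}"
      proof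
        fix i assume i: "i \<in> {b1<..b1+M}"
        have i0: "i \<in> {b0<..b0+n}" using i hi by (auto simp: b1_def)
        note pr = Suc.prems(3)[rule_format, OF i0]
        have "\<not> (Q i \<inter> W \<subseteq> cell j)" using bad i b1M by (auto simp: b1_def)
        then obtain x where x: "x \<in> Q i" "x \<in> W" "x \<notin> cell j" by blast
        have "W \<subseteq> {s b0..s(b0+n)}" unfolding W_def using smle[of "b0+r*M" "b0+n"] rM Suc.prems(1) by auto
        have c1: "s b0 \<le> s b1" using hi Suc.prems(1) by (intro smle) (auto simp: b1_def)
        have c2: "s (b1+M) \<le> s (b0+n)" using hi Suc.prems(1) by (intro smle) auto
        have "Q i \<inter> {s b1..s(b1+M)} \<subseteq> (Q i \<inter> {s b0..s(b0+n)}) - {x}"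
          using x c1 c2 cellj by auto
        hence "card (Q i \<inter> {s b1..s(b1+M)}) \<le> card ((Q i \<inter> {s b0..s(b0+n)}) - {x})"
          using pr by (intro card_mono) auto
        also have "\<dots> = card (Q i \<inter> {s b0..s(b0+n)}) - 1"
          using x \<open>W \<subseteq> _\<close> pr by (subst card_Diff_singleton) auto
        also have "\<dots> \<le> k" using pr by linarith
        finally show "finite (Q i) \<and> card (Q i \<inter> {s b1..s(b1+M)}) \<le> k \<and> Q i \<inter> {s(i-1)..s i} \<noteq> {}"
          using pr by blast
      qed
    qed
    then obtain idx u where g: "good s Q r b1 (b1+M) idx u" by blast
    have "good s Q r b0 (b0+n) idx u"
      by (rule good_weaken[OF g]) (use hi Suc.prems(1) in \<open>auto simp: b1_def intro!: smle\<close>)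
    thus ?thesis by blast
  next
    case False
    hence ch: "\<forall>j\<in>{1..r}. \<exists>c. c \<in> {b0+(j-1)*M<..b0+j*M} \<and> Q c \<inter> W \<subseteq> cell j" by metis
    from bchoice[OF ch] obtain f where f': "\<forall>j\<in>{1..r}. f j \<in> {b0+(j-1)*M<..b0+j*M} \<and> Q (f j) \<inter> W \<subseteq> cell j"
      by blast
    have f: "\<And>j. j \<in> {1..r} \<Longrightarrow> f j \<in> {b0+(j-1)*M<..b0+j*M} \<and> Q (f j) \<inter> W \<subseteq> cell j"
      using f' by blast
    define u where "u j = s (b0 + j*M)" for j
    have jM: "\<And>j. j \<ge> 1 \<Longrightarrow> (j-1)*M + M = j*M" by (case_tac j) auto
    have "good s Q r b0 (b0+n) f u"
      unfolding good_def
    proof (intro conjI ballI)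
      show "strict_mono_on {1..r} f"
      proof (rule strict_mono_onI)
        fix i j assume ij: "i \<in> {1..r}" "j \<in> {1..r}" "i < j"
        have "i * M \<le> (j-1)*M" using ij by (intro mult_le_mono1) auto
        moreover have "f i \<le> b0 + i*M" "b0 + (j-1)*M < f j" using f[OF ij(1)] f[OF ij(2)] by auto
        ultimately show "f i < f j" by linarith
      qed
      show "f ` {1..r} \<subseteq> {b0<..b0+n}"
      proof
        fix y assume "y \<in> f ` {1..r}"
        then obtain j where j: "j \<in> {1..r}" "y = f j" by blast
        have "j*M \<le> r*M" using j by simp
        moreover have "f j \<le> b0 + j*M" "b0 < f j" using f[OF j(1)] by auto
        ultimately have "b0 < y \<and> y \<le> b0+n" using j rM by linarith
        thus "y \<in> {b0<..b0+n}" by simp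
      qed
      fix j assume j: "j \<in> {1..r}"
      have jr: "j*M \<le> r*M" using j by simp
      have "(j-1)*M + M = j*M" using j by (intro jM) auto
      hence "b0 + (j-1)*M < b0 + j*M" using M1 by linarith
      moreover have "b0 + j*M \<le> m" using jr rM Suc.prems(1) by linarith
      ultimately show "u (j-1) < u j" unfolding u_def by (rule smlt)
    next
      show "s b0 \<le> u 0" by (simp add: u_def)
      show "u r \<le> s (b0+n)" unfolding u_def using rM Suc.prems(1) by (intro smle) linarith+
    next
      fix j assume j: "j \<in> {1..r}"
      have jr: "j*M \<le> r*M" using j by simp
      have fj: "f j \<in> {b0+(j-1)*M<..b0+j*M}" using f[OF j] by blast
      have fj1: "b0+(j-1)*M < f j" "f j \<le> b0+j*M" using fj by auto
      have fjm: "f j \<le> m" "b0+j*M \<le> m" using fj1 jr rM Suc.prems(1) by linarith+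
      have a1: "s (b0+(j-1)*M) \<le> s (f j - 1)" using fj1 fjm by (intro smle) linarith+
      have a2: "s (f j) \<le> s (b0+j*M)" using fj1 fjm by (intro smle) linarith+
      show "{s(f j - 1)..s(f j)} \<subseteq> {u(j-1)..u j}" using a1 a2 by (auto simp: u_def)
      show "Q (f j) \<inter> {u 0..u r} \<subseteq> {u(j-1)..u j}"
        using f[OF j] unfolding W_def cell_def u_def by simp
    qed
    thus ?thesis by blast
  qed
qed

lemma mono_from_step:
  fixes s :: "nat \<Rightarrow> real"
  assumes "\<forall>i<m. s i < s (Suc i)"
  shows "\<forall>i j. i < j \<longrightarrow> j \<le> m \<longrightarrow> s i < s j"
proof (intro allI impI)
  fix i j assume "i < j" "j \<le> m"
  thus "s i < s j"
  proof (induction j)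
    case 0 thus ?case by simp
  next
    case (Suc j)
    show ?case
    proof (cases "i = j")
      case True thus ?thesis using Suc.prems assms by auto
    next
      case False
      hence "s i < s j" using Suc by auto
      moreover have "s j < s (Suc j)" using assms Suc.prems by auto
      ultimately show ?thesis by linarith
    qed
  qed
qed

theorem mainTheorem6:
  fixes t m :: nat and a :: "nat \<Rightarrow> real \<Rightarrow> real^2" and v :: "real^2"
    and g :: "real \<Rightarrow> real^2" and s :: "nat \<Rightarrow> real"
  assumes "t \<ge> 1"
    and "grounded a v g s m" and "s 0 = 0" and "s m = 1"
    and "\<forall>i\<in>{1..m}. finite (path_image (a i) \<inter> path_image g)
                      \<and> card (path_image (a i) \<inter> path_image g) \<le> t"
  shows "\<exists>idx :: nat \<Rightarrow> nat. \<exists>u :: nat \<Rightarrow> real.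
           strict_mono_on {1..nat \<lfloor>log (t + 1) (log (t + 1) m)\<rfloor>} idx
         \<and> idx ` {1..nat \<lfloor>log (t + 1) (log (t + 1) m)\<rfloor>} \<subseteq> {1..m}
         \<and> well_grounded (\<lambda>j. a (idx j)) v g u (nat \<lfloor>log (t + 1) (log (t + 1) m)\<rfloor>)
         \<and> (\<forall>j\<in>{1..nat \<lfloor>log (t + 1) (log (t + 1) m)\<rfloor>}. piece g s (idx j) \<subseteq> piece g u j)"
proof -
  obtain R where R: "R = nat \<lfloor>log (t + 1) (log (t + 1) m)\<rfloor>" by blast
  have arcg: "arc g" and step: "\<forall>i<m. s i < s (Suc i)" and vnot: "v \<notin> g ` {0..1}"
    and ai: "\<And>i. i \<in> {1..m} \<Longrightarrow> arc (a i) \<and> pathstart (a i) = v \<and> pathfinish (a i) \<in> g ` {s(i-1)..s i}"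
    using assms(2-4) unfolding grounded_def subdivided_curve_def whole_def piece_def by auto
  have injg: "inj_on g {0..1}" using arcg by (simp add: arc_def)
  have mono: "\<forall>i j. i < j \<longrightarrow> j \<le> m \<longrightarrow> s i < s j" using mono_from_step[OF step] .
  have smle: "\<And>i j. i \<le> j \<Longrightarrow> j \<le> m \<Longrightarrow> s i \<le> s j" using smono_le[OF mono] by blast
  define Q where "Q i = {x\<in>{0..1}. g x \<in> path_image (a i)}" for i
  have gQ: "g ` Q i = path_image (a i) \<inter> path_image g" for i
  proof
    show "g ` Q i \<subseteq> path_image (a i) \<inter> path_image g" unfolding Q_def path_image_def by auto
    show "path_image (a i) \<inter> path_image g \<subseteq> g ` Q i"
    proof
      fix y assume y: "y \<in> path_image (a i) \<inter> path_image g"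
      then obtain x where x: "x \<in> {0..1}" "y = g x" unfolding path_image_def by auto
      thus "y \<in> g ` Q i" using y unfolding Q_def by auto
    qed
  qed
  have Qprops: "finite (Q i) \<and> card (Q i \<inter> {s 0..s (0+m)}) \<le> t \<and> Q i \<inter> {s(i-1)..s i} \<noteq> {}"
    if i: "i \<in> {0<..0+m}" for i
  proof -
    have i1: "i \<in> {1..m}" using i by auto
    have inj: "inj_on g (Q i)" using injg by (rule inj_on_subset) (auto simp: Q_def)
    have fin: "finite (Q i)" using inj gQ[of i] assms(5) i1 by (metis finite_imageD)
    have "card (Q i \<inter> {s 0..s (0+m)}) \<le> card (Q i)" using fin by (intro card_mono) auto
    also have "\<dots> = card (g ` Q i)" using inj by (simp add: card_image)
    also have "\<dots> \<le> t" using gQ[of i] assms(5) i1 by simp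
    finally have c: "card (Q i \<inter> {s 0..s (0+m)}) \<le> t" .
    obtain x where x: "x \<in> {s(i-1)..s i}" "g x = pathfinish (a i)" using ai[OF i1] by auto
    have "s 0 \<le> s (i-1)" "s i \<le> s m" using i1 by (auto intro!: smle)
    hence "x \<in> {0..1}" using x assms(3,4) by auto
    hence "x \<in> Q i" using x by (simp add: Q_def pathfinish_in_path_image)
    thus ?thesis using fin c x by blast
  qed
  show ?thesis
  proof (cases "R = 0")
    case True
    have "well_grounded (\<lambda>j. a (id j)) v g (\<lambda>_. 0) 0"
      unfolding well_grounded_def grounded_def subdivided_curve_def whole_def
      using arcg vnot by auto
    thus ?thesis unfolding R[symmetric] True by auto
  next
    case False
    hence R1: "R \<ge> 1" by simp
    have Rm: "R^t \<le> m" using numbound[OF assms(1) R R1] .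
    obtain idx u where gd: "good s Q R 0 (0+m) idx u"
      using comb[OF R1 mono, of 0 m t Q] Rm Qprops by auto
    have sm: "strict_mono_on {1..R} idx" and rng: "idx ` {1..R} \<subseteq> {0<..m}"
      and uinc: "\<forall>j\<in>{1..R}. u (j-1) < u j" and u0: "s 0 \<le> u 0" and uR: "u R \<le> s m"
      and cells: "\<forall>j\<in>{1..R}. {s(idx j - 1)..s(idx j)} \<subseteq> {u(j-1)..u j} \<and> Q (idx j) \<inter> {u 0..u R} \<subseteq> {u(j-1)..u j}"
      using gd unfolding good_def by auto
    have idx1: "j \<in> {1..R} \<Longrightarrow> idx j \<in> {1..m}" for j
    proof -
      assume "j \<in> {1..R}"
      hence "idx j \<in> {0<..m}" using rng by blast
      thus ?thesis by simp
    qed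
    have sub01: "{u 0..u R} \<subseteq> {0..1}" using u0 uR assms(3,4) by auto
    have wg: "well_grounded (\<lambda>j. a (idx j)) v g u R"
      unfolding well_grounded_def grounded_def subdivided_curve_def whole_def piece_def
    proof (intro conjI ballI allI impI)
      show "arc g" by (rule arcg)
      show "0 \<le> u 0" using u0 assms(3) by simp
      show "u R \<le> 1" using uR assms(4) by simp
      fix i assume "i < R"
      thus "u i < u (Suc i)" using uinc[rule_format, of "Suc i"] by simp
    next
      show "v \<notin> g ` {u 0..u R}" using vnot sub01 by auto
    next
      fix j assume j: "j \<in> {1..R}"
      note A = ai[OF idx1[OF j]]
      show "arc (a (idx j))" using A by simp
      show "pathstart (a (idx j)) = v" using A by simp
      show "pathfinish (a (idx j)) \<in> g ` {u (j-1)..u j}" using A cells j by blast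
    next
      fix j assume j: "j \<in> {1..R}"
      show "path_image (a (idx j)) \<inter> g ` {u 0..u R} \<subseteq> g ` {u (j - 1)..u j}"
      proof
        fix y assume y: "y \<in> path_image (a (idx j)) \<inter> g ` {u 0..u R}"
        then obtain x where x: "x \<in> {u 0..u R}" "y = g x" by auto
        have "x \<in> Q (idx j)" using x y sub01 by (auto simp: Q_def)
        hence "x \<in> {u (j-1)..u j}" using cells j x by blast
        thus "y \<in> g ` {u (j - 1)..u j}" using x by blast
      qed
    qed
    have pc: "\<forall>j\<in>{1..R}. piece g s (idx j) \<subseteq> piece g u j"
      using cells unfolding piece_def by (auto intro!: image_mono)
    show ?thesis unfolding R[symmetric] using sm rng wg pc by (intro exI[of _ idx] exI[of _ u]) auto
  qed
qed

end
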